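(* Under the hypotheses and notation of the dual rate result (Assumption 1, Algorithm (DG) started at $\lambda^0\in\mathbb D$, $\bar\kappa$ an error-bound constant valid on $\{\lambda\in\mathbb D:\mathcal T(\lambda)\le\mathcal T(\lambda^0)\}$, $\rho=\frac{4(1+\bar\kappa)}{1+4(1+\bar\kappa)}$), for all $k\ge1$, \[ \big\|[Gz^k-g]_{\mathbb D}\big\|_{W^{-1}}\le \rho^{\frac{k-2}{2}}\,\mathcal R(\lambda^0). \]
   Context: Standing setup. Consider $\min_{z}\ f(z)=\sum_{i=1}^M f_i(z_i)$ subject to $Az=b$, $Cz\le c$, where $z=(z_1,\dots,z_M)$, $z_i\in\mathbb{R}^{n_i}$, $n=\sum_i n_i$, $A\in\mathbb{R}^{p\times n}$, $C\in\mathbb{R}^{q\times n}$, $b\in\mathbb{R}^p$, $c\in\mathbb{R}^q$, and each $f_i:\mathbb{R}^{n_i}\to\mathbb{R}$ is convex. The rows are partitioned into $\bar M$ blocks: $A$ has blocks $A_{ji}\in\mathbb{R}^{p_j\times n_i}$ and $C$ has blocks $C_{ji}\in\mathbb{R}^{q_j\times n_i}$. A matrix $E\in\{0,1\}^{\bar M\times M}$ is given such that $E_{ji}=0$ implies $A_{ji}=0$ and $C_{ji}=0$; $\bar{\mathcal N}_i=\{j: E_{ji}\neq 0\}$, $\mathcal N_j=\{i:E_{ji}\ne 0\}$. Let $G=\begin{bmatrix}A\\ C\end{bmatrix}$, $g=\begin{bmatrix}b\\ c\end{bmatrix}$, $\lambda=(\nu,\mu)$, $\mathbb{D}=\mathbb{R}^p\times\mathbb{R}^q_+$,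 $\mathcal L(z,\lambda)=f(z)+\langle\lambda,Gz-g\rangle$, $d(\lambda)=\min_{z}\mathcal L(z,\lambda)$, $\nabla d(\lambda)=Gz(\lambda)-g$ with $z(\lambda)$ the unique minimizer of $\mathcal L(\cdot,\lambda)$. $L_{d_i}=\big\|\begin{bmatrix}[A_{ji}]_{j\in\bar{\mathcal N}_i}\\ [C_{ji}]_{j\in\bar{\mathcal N}_i}\end{bmatrix}\big\|^2/\sigma_i$; $W=\mathrm{diag}(W_\nu,W_\mu)$, $W_\nu=\mathrm{diag}\big(\sum_{i\in\mathcal N_j}L_{d_i}I_{p_j};\ j\big)$, $W_\mu=\mathrm{diag}\big(\sum_{i\in\mathcal N_j}L_{d_i}I_{q_j};\ j\big)$, assumed positive definite; $\|x\|_W=\sqrt{x^TWx}$, $\|x\|_{W^{-1}}=\sqrt{x^TW^{-1}x}$. Assumption 1: (a) each $f_i$ is $\sigma_i$-strongly convex and has $L_i$-Lipschitz gradient; (b) $A$ has full row rank and there is $\tilde z$ with $A\tilde z=b$, $C\tilde z<c$. Then the set $\Lambda^*$ of maximizers of $d$ over $\mathbb D$ is nonempty and bounded, and $\max_{\mathbb D}d=f^*$. $[x]^W_S$ is the $\|\cdot\|_W$-projection onto $S$; $[x]_{\mathbb D}$ is the Euclidean projection onto $\mathbb D$ (first $p$ coordinates unchanged, positive part of last $q$). $\nabla^+ d(\lambda)=[\lambda+W^{-1}\nabla d(\lambda)]^W_{\mathbb D}-\lambda$. $\mathcal R(\lambda)=\min_{\lambda^*\in\Lambda^*}\|\lambda^*-\lambda\|_W$,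 $\mathcal T(\lambda)=\max_{\lambda^*\in\Lambda^*}\|\lambda-\lambda^*\|_W$. $\bar\kappa$ is a constant with $\|\lambda-[\lambda]^W_{\Lambda^*}\|_W\le\bar\kappa\|\nabla^+d(\lambda)\|_W$ for all $\lambda\in\mathbb D$ with $\mathcal T(\lambda)\le\mathcal T(\lambda^0)$. Algorithm (DG): given $\lambda^0\in\mathbb D$, for $k\ge0$ set $z^k=\arg\min_{z}\mathcal L(z,\lambda^k)$ and $\lambda^{k+1}=[\lambda^k+W^{-1}\nabla d(\lambda^k)]_{\mathbb D}$. *)

theory Defs
  imports "HOL-Analysis.Analysis"
begin

text \<open>Primal coordinates are indexed by a finite type 'n; a map
  blk :: 'n => 'b assigns each coordinate to its block i (so z_i is the
  restriction of z to the coordinates c with blk c = i). The rows of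
  G = [A; C] are indexed by a finite type 'r; isIneq r says that row r is a
  row of C (inequality) rather than of A (equality). rb :: 'r => 'j assigns
  each row to its row block j. E j i is the 0/1 matrix E as a predicate.\<close>

definition blockproj :: "('n \<Rightarrow> 'b) \<Rightarrow> 'b \<Rightarrow> real^'n \<Rightarrow> real^'n" where
  "blockproj blk i x = (\<chi> c. if blk c = i then x $ c else 0)"

definition depends_on_block :: "('n \<Rightarrow> 'b) \<Rightarrow> 'b \<Rightarrow> (real^'n \<Rightarrow> real) \<Rightarrow> bool" where
  "depends_on_block blk i h \<longleftrightarrow>
     (\<forall>x y. (\<forall>c. blk c = i \<longrightarrow> x $ c = y $ c) \<longrightarrow> h x = h y)"

definition block_strongly_convex ::
  "('n \<Rightarrow> 'b) \<Rightarrow> 'b \<Rightarrow> real \<Rightarrow> (real^'n \<Rightarrow> real) \<Rightarrow> bool" where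
  "block_strongly_convex blk i \<sigma> h \<longleftrightarrow>
     (\<forall>x y t. 0 \<le> t \<and> t \<le> 1 \<longrightarrow>
        h (t *\<^sub>R x + (1 - t) *\<^sub>R y) \<le> t * h x + (1 - t) * h y
          - \<sigma> / 2 * t * (1 - t) * (norm (blockproj blk i (x - y)))\<^sup>2)"

definition block_lipschitz_gradient ::
  "('n \<Rightarrow> 'b) \<Rightarrow> 'b \<Rightarrow> real \<Rightarrow> (real^'n \<Rightarrow> real) \<Rightarrow> bool" where
  "block_lipschitz_gradient blk i L h \<longleftrightarrow>
     (\<exists>gr. (\<forall>x. GDERIV h x :> gr x) \<and>
           (\<forall>x y. norm (gr x - gr y) \<le> L * norm (blockproj blk i (x - y))))"

definition Lag :: "('b \<Rightarrow> real^'n \<Rightarrow> real) \<Rightarrow> real^'n^'r \<Rightarrow> real^'r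
    \<Rightarrow> real^'n \<Rightarrow> real^'r \<Rightarrow> real" where
  "Lag f G g z lm = (\<Sum>i\<in>UNIV. f i z) + inner lm (G *v z - g)"

definition dualfun :: "('b \<Rightarrow> real^'n \<Rightarrow> real) \<Rightarrow> real^'n^'r \<Rightarrow> real^'r
    \<Rightarrow> real^'r \<Rightarrow> real" where
  "dualfun f G g lm = Inf (range (\<lambda>z. Lag f G g z lm))"

definition zopt :: "('b \<Rightarrow> real^'n \<Rightarrow> real) \<Rightarrow> real^'n^'r \<Rightarrow> real^'r
    \<Rightarrow> real^'r \<Rightarrow> real^'n" where
  "zopt f G g lm = (THE z. \<forall>z'. Lag f G g z lm \<le> Lag f G g z' lm)"

definition dualgrad :: "('b \<Rightarrow> real^'n \<Rightarrow> real) \<Rightarrow> real^'n^'r \<Rightarrow> real^'r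
    \<Rightarrow> real^'r \<Rightarrow> real^'r" where
  "dualgrad f G g lm = G *v zopt f G g lm - g"

definition Dset :: "('r \<Rightarrow> bool) \<Rightarrow> (real^'r) set" where
  "Dset isIneq = {lm. \<forall>r. isIneq r \<longrightarrow> 0 \<le> lm $ r}"

definition projD :: "('r \<Rightarrow> bool) \<Rightarrow> real^'r \<Rightarrow> real^'r" where
  "projD isIneq x = (\<chi> r. if isIneq r then max 0 (x $ r) else x $ r)"

text \<open>Lipschitz constant L_{d_i}: squared spectral norm of the stacked
  block [A_ji; C_ji] (j in bar N_i) divided by sigma_i.\<close>
definition Ld :: "real^'n^'r \<Rightarrow> ('n \<Rightarrow> 'b) \<Rightarrow> ('r \<Rightarrow> 'j) \<Rightarrow> ('j \<Rightarrow> 'b \<Rightarrow> bool)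
    \<Rightarrow> ('b \<Rightarrow> real) \<Rightarrow> 'b \<Rightarrow> real" where
  "Ld G blk rb E \<sigma> i =
     (onorm (\<lambda>x::real^'n. \<chi> r. if E (rb r) i
                 then (\<Sum>c\<in>{c. blk c = i}. G $ r $ c * x $ c) else 0))\<^sup>2 / \<sigma> i"

text \<open>Diagonal entry of W for row r (row block j = rb r).\<close>
definition Wdiag :: "real^'n^'r \<Rightarrow> ('n \<Rightarrow> 'b) \<Rightarrow> ('r \<Rightarrow> 'j) \<Rightarrow> ('j \<Rightarrow> 'b \<Rightarrow> bool)
    \<Rightarrow> ('b \<Rightarrow> real) \<Rightarrow> 'r \<Rightarrow> real" where
  "Wdiag G blk rb E \<sigma> r = (\<Sum>i\<in>{i. E (rb r) i}. Ld G blk rb E \<sigma> i)"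

definition Wnorm :: "('r \<Rightarrow> real) \<Rightarrow> real^'r \<Rightarrow> real" where
  "Wnorm w x = sqrt (\<Sum>r\<in>UNIV. w r * (x $ r)\<^sup>2)"

definition Winvnorm :: "('r \<Rightarrow> real) \<Rightarrow> real^'r \<Rightarrow> real" where
  "Winvnorm w x = sqrt (\<Sum>r\<in>UNIV. (x $ r)\<^sup>2 / w r)"

definition Winv :: "('r \<Rightarrow> real) \<Rightarrow> real^'r \<Rightarrow> real^'r" where
  "Winv w x = (\<chi> r. x $ r / w r)"

definition projW :: "('r \<Rightarrow> real) \<Rightarrow> (real^'r) set \<Rightarrow> real^'r \<Rightarrow> real^'r" where
  "projW w S x = (SOME y. y \<in> S \<and> (\<forall>y'\<in>S. Wnorm w (x - y) \<le> Wnorm w (x - y')))"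

definition dualopt :: "('b \<Rightarrow> real^'n \<Rightarrow> real) \<Rightarrow> real^'n^'r \<Rightarrow> real^'r
    \<Rightarrow> ('r \<Rightarrow> bool) \<Rightarrow> (real^'r) set" where
  "dualopt f G g isIneq =
     {lm \<in> Dset isIneq. \<forall>\<mu> \<in> Dset isIneq. dualfun f G g \<mu> \<le> dualfun f G g lm}"

definition gradplus :: "('b \<Rightarrow> real^'n \<Rightarrow> real) \<Rightarrow> real^'n^'r \<Rightarrow> real^'r
    \<Rightarrow> ('r \<Rightarrow> bool) \<Rightarrow> ('r \<Rightarrow> real) \<Rightarrow> real^'r \<Rightarrow> real^'r" where
  "gradplus f G g isIneq w lm =
     projW w (Dset isIneq) (lm + Winv w (dualgrad f G g lm)) - lm"

definition Rdist :: "('r \<Rightarrow> real) \<Rightarrow> (real^'r) set \<Rightarrow> real^'r \<Rightarrow> real" where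
  "Rdist w S lm = Inf ((\<lambda>s. Wnorm w (s - lm)) ` S)"

definition Tdist :: "('r \<Rightarrow> real) \<Rightarrow> (real^'r) set \<Rightarrow> real^'r \<Rightarrow> real" where
  "Tdist w S lm = Sup ((\<lambda>s. Wnorm w (lm - s)) ` S)"

end

theory Submission
  imports Defs
begin

lemma inner_cart: "inner (x::real^'r::finite) y = (\<Sum>r\<in>UNIV. x$r * y$r)"
  by (simp add: inner_vec_def)

lemma Lag_eq: "Lag f G g z lm = (\<Sum>i\<in>UNIV. f i z) + (\<Sum>r\<in>UNIV. lm$r * ((G *v z)$r - g$r))"
  by (simp add: Lag_def inner_cart)

lemma norm_blockproj_sq:
  "(norm (blockproj blk i (v::real^'n::finite)))\<^sup>2 = (\<Sum>c\<in>UNIV. if blk c = i then (v$c)\<^sup>2 else 0)"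
  unfolding power2_norm_eq_inner inner_cart blockproj_def
  by (rule sum.cong) (auto simp: power2_eq_square)

lemma sum_blocks:
  fixes h :: "'n::finite \<Rightarrow> real" and s :: "'b::finite \<Rightarrow> real"
  shows "(\<Sum>i\<in>UNIV. s i * (\<Sum>c\<in>UNIV. if blk c = i then h c else 0)) = (\<Sum>c\<in>UNIV. s (blk c) * h c)"
proof -
  have "(\<Sum>i\<in>UNIV. s i * (\<Sum>c\<in>UNIV. if blk c = i then h c else 0))
      = (\<Sum>i\<in>UNIV. \<Sum>c\<in>UNIV. if blk c = i then s i * h c else 0)"
    by (simp add: sum_distrib_left if_distrib cong: if_cong)
  also have "\<dots> = (\<Sum>c\<in>UNIV. \<Sum>i\<in>UNIV. if blk c = i then s i * h c else 0)"
    by (rule sum.swap)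
  also have "\<dots> = (\<Sum>c\<in>UNIV. s (blk c) * h c)"
    by (rule sum.cong) (auto simp: sum.delta)
  finally show ?thesis .
qed

definition SQ :: "('b \<Rightarrow> real) \<Rightarrow> ('n \<Rightarrow> 'b) \<Rightarrow> real^'n \<Rightarrow> real" where
  "SQ \<sigma> blk v = (\<Sum>c\<in>UNIV. \<sigma> (blk c) * (v$c)\<^sup>2)"

lemma Lag_sconv:
  fixes f :: "'b::finite \<Rightarrow> real^'n::finite \<Rightarrow> real"
  assumes sc: "\<And>i. block_strongly_convex blk i (\<sigma> i) (f i)" and t: "0 \<le> t" "t \<le> 1"
  shows "Lag f G g (t *\<^sub>R x + (1 - t) *\<^sub>R y) lm \<le> t * Lag f G g x lm + (1 - t) * Lag f G g y lm
          - t * (1 - t) / 2 * SQ \<sigma> blk (x - y)"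
proof -
  have fi: "f i (t *\<^sub>R x + (1 - t) *\<^sub>R y) \<le> t * f i x + (1 - t) * f i y
          - t * (1 - t) / 2 * (\<sigma> i * (\<Sum>c\<in>UNIV. if blk c = i then ((x-y)$c)\<^sup>2 else 0))" for i
    using sc[of i] t unfolding block_strongly_convex_def norm_blockproj_sq
    by (auto simp: algebra_simps)
  define cc where "cc = t * (1 - t) / 2"
  have "(\<Sum>i\<in>UNIV. f i (t *\<^sub>R x + (1 - t) *\<^sub>R y)) \<le> (\<Sum>i\<in>UNIV. t * f i x + (1 - t) * f i y
          - cc * (\<sigma> i * (\<Sum>c\<in>UNIV. if blk c = i then ((x-y)$c)\<^sup>2 else 0)))"
    by (rule sum_mono) (use fi in \<open>simp add: cc_def\<close>)
  also have "\<dots> = t * (\<Sum>i\<in>UNIV. f i x) + (1 - t) * (\<Sum>i\<in>UNIV. f i y) - cc * (\<Sum>i\<in>UNIV. \<sigma> i * (\<Sum>c\<in>UNIV. if blk c = i then ((x-y)$c)\<^sup>2 else 0))"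
    by (simp add: sum.distrib sum_subtractf sum_distrib_left)
  also have "\<dots> = t * (\<Sum>i\<in>UNIV. f i x) + (1 - t) * (\<Sum>i\<in>UNIV. f i y) - t * (1 - t) / 2 * SQ \<sigma> blk (x - y)"
    unfolding SQ_def sum_blocks cc_def ..
  finally have A: "(\<Sum>i\<in>UNIV. f i (t *\<^sub>R x + (1 - t) *\<^sub>R y)) \<le> t * (\<Sum>i\<in>UNIV. f i x) + (1 - t) * (\<Sum>i\<in>UNIV. f i y) - t * (1 - t) / 2 * SQ \<sigma> blk (x - y)" .
  have B: "(\<Sum>r\<in>UNIV. lm$r * ((G *v (t *\<^sub>R x + (1 - t) *\<^sub>R y))$r - g$r))
     = t * (\<Sum>r\<in>UNIV. lm$r * ((G *v x)$r - g$r)) + (1 - t) * (\<Sum>r\<in>UNIV. lm$r * ((G *v y)$r - g$r))"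
    by (simp add: matrix_vector_right_distrib matrix_vector_mult_scaleR sum_distrib_left sum.distrib[symmetric] algebra_simps)
  show ?thesis unfolding Lag_eq using A B by (simp add: algebra_simps)
qed

lemma SQ_nonneg: "(\<And>i. \<sigma> i > 0) \<Longrightarrow> SQ \<sigma> blk v \<ge> 0"
  unfolding SQ_def by (intro sum_nonneg) (simp add: less_imp_le)

lemma SQ_zero: assumes "\<And>i. \<sigma> i > 0" "SQ \<sigma> blk v = 0" shows "v = 0"
proof -
  have "\<forall>c\<in>UNIV. \<sigma> (blk c) * (v$c)\<^sup>2 = 0"
    using assms unfolding SQ_def by (subst sum_nonneg_eq_0_iff[symmetric]) (auto simp: less_imp_le)
  then show ?thesis using assms(1) by (auto simp: vec_eq_iff) (metis less_irrefl)
qed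

lemma norm_sq_cart: "(norm (v::real^'n::finite))\<^sup>2 = (\<Sum>c\<in>UNIV. (v$c)\<^sup>2)"
  unfolding power2_norm_eq_inner inner_cart by (simp add: power2_eq_square)

lemma SQ_lower:
  fixes \<sigma> :: "'b::finite \<Rightarrow> real"
  assumes "\<And>i. \<sigma> i > 0"
  shows "\<exists>s0>0. \<forall>v::real^'n::finite. SQ \<sigma> blk v \<ge> s0 * (norm v)\<^sup>2"
proof -
  define s0 where "s0 = Min (range \<sigma>)"
  have s0pos: "s0 > 0" unfolding s0_def using assms by (subst Min_gr_iff) auto
  have le: "s0 \<le> \<sigma> i" for i unfolding s0_def by (rule Min_le) auto
  have "SQ \<sigma> blk v \<ge> s0 * (norm v)\<^sup>2" for v :: "real^'n"
    unfolding SQ_def norm_sq_cart sum_distrib_left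
    by (rule sum_mono) (simp add: le mult_right_mono)
  with s0pos show ?thesis by blast
qed

lemma SQ_convex_identity:
  fixes x y :: "real^'n::finite" and \<sigma> :: "'b \<Rightarrow> real" and blk :: "'n \<Rightarrow> 'b"
  shows "t * SQ \<sigma> blk x + (1 - t) * SQ \<sigma> blk y - SQ \<sigma> blk (t *\<^sub>R x + (1 - t) *\<^sub>R y)
     = t * (1 - t) * SQ \<sigma> blk (x - y)"
  unfolding SQ_def sum_distrib_left sum.distrib[symmetric] sum_subtractf[symmetric]
  by (rule sum.cong) (auto simp: power2_eq_square algebra_simps)

lemma gen_lin: "2*D = 2*A - B \<Longrightarrow> 0 \<le> A \<Longrightarrow> B = 0 \<Longrightarrow> 0 \<le> (D::real)" by linarith

lemma arith_cvx:
  fixes Lp Lx Ly Sp Sx Sy S t :: real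
  assumes "Lp \<le> t*Ly + (1-t)*Lx - t*(1-t)/2*S" "t*Sy + (1-t)*Sx - Sp = t*(1-t)*S"
  shows "Lp - Sp/2 \<le> (1-t)*(Lx - Sx/2) + t*(Ly - Sy/2)"
proof -
  have "2*((1-t)*(Lx - Sx/2) + t*(Ly - Sy/2) - (Lp - Sp/2))
     = 2*(t*Ly + (1-t)*Lx - t*(1-t)/2*S - Lp) - (t*Sy + (1-t)*Sx - Sp - t*(1-t)*S)"
    by (simp add: field_simps)
  moreover have "0 \<le> t*Ly + (1-t)*Lx - t*(1-t)/2*S - Lp" using assms(1) by linarith
  moreover have "t*Sy + (1-t)*Sx - Sp - t*(1-t)*S = 0" using assms(2) by linarith
  ultimately have "0 \<le> (1-t)*(Lx - Sx/2) + t*(Ly - Sy/2) - (Lp - Sp/2)" by (rule gen_lin)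
  then show ?thesis by (simp only: diff_ge_0_iff_ge)
qed

lemma Lag_minus_SQ_convex:
  fixes f :: "'b::finite \<Rightarrow> real^'n::finite \<Rightarrow> real"
  assumes sc: "\<And>i. block_strongly_convex blk i (\<sigma> i) (f i)"
  shows "convex_on UNIV (\<lambda>x. Lag f G g x lm - SQ \<sigma> blk x / 2)"
proof (rule convex_onI)
  fix t x y :: "_" assume t: "0 < (t::real)" "t < 1"
  have F1: "Lag f G g (t *\<^sub>R y + (1 - t) *\<^sub>R x) lm \<le> t * Lag f G g y lm + (1 - t) * Lag f G g x lm
          - t * (1 - t) / 2 * SQ \<sigma> blk (y - x)"
    using Lag_sconv[OF sc, where t=t and x=y and y=x and G=G and g=g and lm=lm] t by simp
  have F2: "t * SQ \<sigma> blk y + (1 - t) * SQ \<sigma> blk x - SQ \<sigma> blk (t *\<^sub>R y + (1 - t) *\<^sub>R x)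
     = t * (1 - t) * SQ \<sigma> blk (y - x)" by (rule SQ_convex_identity)
  have E: "(1 - t) *\<^sub>R x + t *\<^sub>R y = t *\<^sub>R y + (1 - t) *\<^sub>R x" by simp
  show "Lag f G g ((1 - t) *\<^sub>R x + t *\<^sub>R y) lm - SQ \<sigma> blk ((1 - t) *\<^sub>R x + t *\<^sub>R y) / 2
     \<le> (1 - t) * (Lag f G g x lm - SQ \<sigma> blk x / 2) + t * (Lag f G g y lm - SQ \<sigma> blk y / 2)"
    unfolding E by (rule arith_cvx[OF F1 F2])
qed simp

lemma convex_lower_linear:
  fixes q :: "'a::euclidean_space \<Rightarrow> real"
  assumes cv: "convex_on UNIV q"
  shows "\<exists>m c. c \<ge> 0 \<and> (\<forall>y. q y \<ge> m - c * norm y)"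
proof -
  have cont: "continuous_on UNIV q" using convex_on_continuous[OF open_UNIV cv] .
  obtain x0 where x0: "x0 \<in> cball 0 1" "\<And>y. y \<in> cball 0 1 \<Longrightarrow> q x0 \<le> q y"
  proof -
    have "\<exists>x\<in>cball (0::'a) 1. \<forall>y\<in>cball 0 1. q x \<le> q y"
      by (rule continuous_attains_inf) (auto intro: continuous_on_subset[OF cont])
    then show ?thesis using that by blast
  qed
  define m where "m = q x0"
  define c where "c = q 0 - m"
  have c0: "c \<ge> 0" unfolding c_def m_def using x0(2)[of 0] by simp
  have "q y \<ge> m - c * norm y" for y
  proof (cases "norm y \<le> 1")
    case True
    then have "q y \<ge> m" unfolding m_def using x0(2) by simp
    then show ?thesis using c0 by (smt (verit) mult_nonneg_nonneg norm_ge_zero)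
  next
    case False
    define n where "n = norm y"
    have n1: "n > 1" using False n_def by simp
    define u where "u = (1 / n) *\<^sub>R y"
    have y0: "y \<noteq> 0" using n1 n_def by auto
    have "norm u = 1" unfolding u_def n_def using y0 by simp
    then have qu: "q u \<ge> m" unfolding m_def using x0(2) by simp
    have "u = (1 - 1/n) *\<^sub>R 0 + (1/n) *\<^sub>R y" unfolding u_def by simp
    then have "q u \<le> (1 - 1/n) * q 0 + (1/n) * q y"
      using convex_onD[OF cv, of "1/n" 0 y] n1 by simp
    then have "n * q u \<le> (n - 1) * q 0 + q y"
      using n1 by (simp add: field_simps)
    moreover have "n * m \<le> n * q u" using qu n1 by simp
    ultimately have "q y \<ge> n * m - (n - 1) * q 0" by simp
    moreover have "m \<le> q 0" using c0 c_def by simp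
    ultimately show ?thesis unfolding c_def n_def[symmetric] using n1 by (simp add: algebra_simps)
  qed
  with c0 show ?thesis by blast
qed

lemma Lag_bdd_below:
  fixes f :: "'b::finite \<Rightarrow> real^'n::finite \<Rightarrow> real"
  assumes sc: "\<And>i. block_strongly_convex blk i (\<sigma> i) (f i)" and sp: "\<And>i. \<sigma> i > 0"
  shows "bdd_below (range (\<lambda>z. Lag f G g z lm))"
proof -
  obtain m c where mc: "c \<ge> 0" "\<And>y. Lag f G g y lm - SQ \<sigma> blk y / 2 \<ge> m - c * norm y"
    using convex_lower_linear[OF Lag_minus_SQ_convex[OF sc]] by blast
  obtain s0 where s0: "s0 > 0" "\<And>v::real^'n. SQ \<sigma> blk v \<ge> s0 * (norm v)\<^sup>2"
    using SQ_lower[where \<sigma>=\<sigma> and blk=blk, OF sp] by blast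
  have "Lag f G g y lm \<ge> m - c\<^sup>2 / (2 * s0)" for y
  proof -
    define n where "n = norm y"
    have "Lag f G g y lm \<ge> m - c * n + s0 * n\<^sup>2 / 2"
      using mc(2)[of y] s0(2)[of y] unfolding n_def by simp
    moreover have "s0 * n\<^sup>2 / 2 - c * n \<ge> - c\<^sup>2 / (2 * s0)"
    proof -
      have "0 \<le> (s0 * n - c)\<^sup>2" by simp
      then have "0 \<le> s0\<^sup>2 * n\<^sup>2 - 2 * s0 * c * n + c\<^sup>2" by (simp add: power2_eq_square algebra_simps)
      then show ?thesis using s0(1) by (simp add: field_simps power2_eq_square)
    qed
    ultimately show ?thesis by simp
  qed
  then show ?thesis by (intro bdd_belowI2) 
qed

lemma qgrowth:
  fixes f :: "'b::finite \<Rightarrow> real^'n::finite \<Rightarrow> real"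
  assumes sc: "\<And>i. block_strongly_convex blk i (\<sigma> i) (f i)" and sp: "\<And>i. \<sigma> i > 0"
    and mn: "\<And>z'. Lag f G g x lm \<le> Lag f G g z' lm"
  shows "Lag f G g y lm \<ge> Lag f G g x lm + SQ \<sigma> blk (y - x) / 2"
proof -
  define a where "a = Lag f G g y lm - Lag f G g x lm"
  define b where "b = SQ \<sigma> blk (y - x) / 2"
  have b0: "b \<ge> 0" unfolding b_def using SQ_nonneg[where \<sigma>=\<sigma> and blk=blk and v="y - x", OF sp] by simp
  have key: "a \<ge> (1 - t) * b" if t: "0 < t" "t < 1" for t
  proof -
    have "Lag f G g x lm \<le> Lag f G g (t *\<^sub>R y + (1 - t) *\<^sub>R x) lm" by (rule mn)
    also have "\<dots> \<le> t * Lag f G g y lm + (1 - t) * Lag f G g x lm - t * (1 - t) / 2 * SQ \<sigma> blk (y - x)"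
      using Lag_sconv[OF sc, where t=t and x=y and y=x and G=G and g=g and lm=lm] t by simp
    finally have "t * a \<ge> t * ((1 - t) * b)" unfolding a_def b_def by (simp add: algebra_simps)
    then show ?thesis using t by simp
  qed
  have "a \<ge> b"
  proof (rule ccontr)
    assume "\<not> a \<ge> b"
    then have ab: "a < b" by simp
    have "a \<ge> b / 2" using key[of "1/2"] by simp
    then have a0: "a \<ge> 0" using b0 by simp
    define t where "t = (b - a) / (2 * b)"
    have bp: "b > 0" using ab a0 by simp
    have t: "0 < t" "t < 1" unfolding t_def using ab bp a0 by (auto simp: field_simps)
    have "(1 - t) * b = (a + b) / 2" unfolding t_def using bp by (simp add: field_simps)
    then show False using key[OF t] ab by simp
  qed
  then show ?thesis unfolding a_def b_def by simp
qed

lemma minimizer_unique: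
  fixes f :: "'b::finite \<Rightarrow> real^'n::finite \<Rightarrow> real"
  assumes sc: "\<And>i. block_strongly_convex blk i (\<sigma> i) (f i)" and sp: "\<And>i. \<sigma> i > 0"
    and mn: "\<And>z'. Lag f G g x lm \<le> Lag f G g z' lm"
    and mn2: "\<And>z'. Lag f G g y lm \<le> Lag f G g z' lm"
  shows "y = x"
proof -
  have "Lag f G g y lm \<ge> Lag f G g x lm + SQ \<sigma> blk (y - x) / 2" by (rule qgrowth[OF sc sp mn])
  moreover have "Lag f G g y lm \<le> Lag f G g x lm" by (rule mn2)
  ultimately have "SQ \<sigma> blk (y - x) = 0" using SQ_nonneg[where \<sigma>=\<sigma> and blk=blk and v="y - x", OF sp] by simp
  then show ?thesis using SQ_zero[where \<sigma>=\<sigma> and blk=blk and v="y-x", OF sp] by simp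
qed

definition Mblk :: "real^'n^'r \<Rightarrow> ('n \<Rightarrow> 'b) \<Rightarrow> ('r \<Rightarrow> 'j) \<Rightarrow> ('j \<Rightarrow> 'b \<Rightarrow> bool) \<Rightarrow> 'b \<Rightarrow> real^'n \<Rightarrow> real^'r"
  where "Mblk G blk rb E i = (\<lambda>x::real^'n. \<chi> r. if E (rb r) i
                 then (\<Sum>c\<in>{c. blk c = i}. G $ r $ c * x $ c) else 0)"

lemma Ld_Mblk: "Ld G blk rb E \<sigma> i = (onorm (Mblk G blk rb E i))\<^sup>2 / \<sigma> i"
  unfolding Ld_def Mblk_def ..

lemma Mblk_bl: "bounded_linear (Mblk G blk rb E i :: real^'n::finite \<Rightarrow> real^'r::finite)"
proof -
  have "linear (Mblk G blk rb E i :: real^'n::finite \<Rightarrow> real^'r::finite)"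
    by (rule linearI) (auto simp: Mblk_def vec_eq_iff sum.distrib sum_distrib_left algebra_simps)
  then show ?thesis using linear_conv_bounded_linear by blast
qed

lemma Mblk_blockproj: "Mblk G blk rb E i (blockproj blk i v) = Mblk G blk rb E i v"
  unfolding Mblk_def blockproj_def by (simp add: vec_eq_iff)

lemma Ld_nonneg: "\<sigma> i > 0 \<Longrightarrow> Ld G blk rb E \<sigma> i \<ge> 0"
  unfolding Ld_def by simp

lemma Mblk_bound:
  fixes G :: "real^'n::finite^'r::finite"
  assumes sp: "\<sigma> i > 0"
  shows "(norm (Mblk G blk rb E i v))\<^sup>2 / Ld G blk rb E \<sigma> i
          \<le> \<sigma> i * (\<Sum>c\<in>UNIV. if blk c = i then (v$c)\<^sup>2 else 0)"
proof (cases "Ld G blk rb E \<sigma> i = 0")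
  case True
  then show ?thesis using sp by (simp add: sum_nonneg)
next
  case False
  define on where "on = onorm (Mblk G blk rb E i)"
  have on0: "on \<ge> 0" unfolding on_def by (rule onorm_pos_le[OF Mblk_bl])
  have Ldp: "Ld G blk rb E \<sigma> i > 0" using False Ld_nonneg[where \<sigma>=\<sigma> and i=i and G=G and blk=blk and rb=rb and E=E, OF sp] by (simp add: less_le)
  have "norm (Mblk G blk rb E i v) \<le> on * norm (blockproj blk i v)"
    unfolding on_def Mblk_blockproj[symmetric, of G blk rb E i v] by (rule onorm[OF Mblk_bl])
  then have "(norm (Mblk G blk rb E i v))\<^sup>2 \<le> (on * norm (blockproj blk i v))\<^sup>2"
    by (simp add: power_mono)
  also have "\<dots> = Ld G blk rb E \<sigma> i * \<sigma> i * (norm (blockproj blk i v))\<^sup>2"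
    unfolding Ld_Mblk on_def[symmetric] using sp by (simp add: power_mult_distrib)
  finally show ?thesis using Ldp unfolding norm_blockproj_sq by (simp add: field_simps)
qed

lemma Mblk_zero:
  fixes G :: "real^'n::finite^'r::finite"
  assumes sp: "\<sigma> i > 0" and L0: "Ld G blk rb E \<sigma> i = 0"
  shows "Mblk G blk rb E i v = 0"
proof -
  have "onorm (Mblk G blk rb E i) = 0" using L0 sp unfolding Ld_Mblk by simp
  then show ?thesis by (subst (asm) onorm_eq_0[OF Mblk_bl]) simp
qed

lemma CS_weighted:
  fixes a L :: "'i \<Rightarrow> real"
  assumes "\<And>i. i \<in> N \<Longrightarrow> L i \<ge> 0" "\<And>i. i \<in> N \<Longrightarrow> L i = 0 \<Longrightarrow> a i = 0"
  shows "(\<Sum>i\<in>N. a i)\<^sup>2 \<le> (\<Sum>i\<in>N. L i) * (\<Sum>i\<in>N. (a i)\<^sup>2 / L i)"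
proof -
  have e1: "(\<Sum>i\<in>N. a i) = (\<Sum>i\<in>N. sqrt (L i) * (a i / sqrt (L i)))"
    by (rule sum.cong) (use assms in auto)
  have e2: "(\<Sum>i\<in>N. L i) = (\<Sum>i\<in>N. (sqrt (L i))\<^sup>2)"
    by (rule sum.cong) (use assms in auto)
  have e3: "(\<Sum>i\<in>N. (a i)\<^sup>2 / L i) = (\<Sum>i\<in>N. (a i / sqrt (L i))\<^sup>2)"
    by (rule sum.cong) (use assms in \<open>auto simp: power_divide\<close>)
  show ?thesis unfolding e1 e2 e3 by (rule Cauchy_Schwarz_ineq_sum)
qed

definition Winvsq :: "('r \<Rightarrow> real) \<Rightarrow> real^'r \<Rightarrow> real" where
  "Winvsq w x = (\<Sum>r\<in>UNIV. (x $ r)\<^sup>2 / w r)"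

lemma key_lip:
  fixes G :: "real^'n::finite^'r::finite" and \<sigma> :: "'b::finite \<Rightarrow> real" and rb :: "'r \<Rightarrow> 'j"
  assumes sparse: "\<And>j i r c. \<not> E j i \<Longrightarrow> rb r = j \<Longrightarrow> blk c = i \<Longrightarrow> G $ r $ c = 0"
    and sp: "\<And>i. \<sigma> i > 0"
    and wpos: "\<And>r. Wdiag G blk rb E \<sigma> r > 0"
  shows "Winvsq (Wdiag G blk rb E \<sigma>) (G *v v) \<le> SQ \<sigma> blk v"
proof -
  define w where "w = Wdiag G blk rb E \<sigma>"
  define a where "a r i = (\<Sum>c\<in>{c. blk c = i}. G$r$c * v$c)" for r i
  define N where "N r = {i. E (rb r) i}" for r
  define L where "L = Ld G blk rb E \<sigma>"
  have wL: "w r = (\<Sum>i\<in>N r. L i)" for r unfolding w_def Wdiag_def N_def L_def ..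
  have F1: "(G *v v)$r = (\<Sum>i\<in>N r. a r i)" for r
  proof -
    have "(G *v v)$r = (\<Sum>c\<in>UNIV. G$r$c * v$c)" by (simp add: matrix_vector_mult_def)
    also have "\<dots> = (\<Sum>i\<in>UNIV. a r i)"
      unfolding a_def using sum.group[of UNIV UNIV blk "\<lambda>c. G$r$c * v$c"] by simp
    also have "\<dots> = (\<Sum>i\<in>N r. a r i)"
      by (rule sum.mono_neutral_right) (auto simp: N_def a_def sparse)
    finally show ?thesis .
  qed
  have Mcomp: "Mblk G blk rb E i v $ r = (if E (rb r) i then a r i else 0)" for i r
    unfolding Mblk_def a_def by simp
  have F2: "(\<Sum>i\<in>N r. a r i)\<^sup>2 \<le> w r * (\<Sum>i\<in>N r. (a r i)\<^sup>2 / L i)" for r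
    unfolding wL
  proof (rule CS_weighted)
    fix i assume "i \<in> N r"
    show "L i \<ge> 0" unfolding L_def by (rule Ld_nonneg[where \<sigma>=\<sigma> and i=i, OF sp])
    assume "L i = 0"
    then have "Mblk G blk rb E i v = 0" using Mblk_zero[where \<sigma>=\<sigma> and i=i, OF sp] unfolding L_def by blast
    then have "Mblk G blk rb E i v $ r = 0" by simp
    then show "a r i = 0" using \<open>i \<in> N r\<close> unfolding Mcomp N_def by simp
  qed
  have "Winvsq w (G *v v) = (\<Sum>r\<in>UNIV. ((G *v v)$r)\<^sup>2 / w r)" unfolding Winvsq_def ..
  also have "\<dots> \<le> (\<Sum>r\<in>UNIV. \<Sum>i\<in>N r. (a r i)\<^sup>2 / L i)"
  proof (rule sum_mono)
    fix r
    have "w r > 0" unfolding w_def by (rule wpos)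
    then show "((G *v v)$r)\<^sup>2 / w r \<le> (\<Sum>i\<in>N r. (a r i)\<^sup>2 / L i)"
      using F2[of r] unfolding F1 by (simp add: divide_le_eq mult.commute)
  qed
  also have "\<dots> = (\<Sum>r\<in>UNIV. \<Sum>i\<in>UNIV. if E (rb r) i then (a r i)\<^sup>2 / L i else 0)"
    unfolding N_def by (simp add: sum.inter_filter[symmetric])
  also have "\<dots> = (\<Sum>i\<in>UNIV. \<Sum>r\<in>UNIV. if E (rb r) i then (a r i)\<^sup>2 / L i else 0)"
    by (rule sum.swap)
  also have "\<dots> = (\<Sum>i\<in>UNIV. (norm (Mblk G blk rb E i v))\<^sup>2 / L i)"
    unfolding norm_sq_cart Mcomp sum_divide_distrib
    by (rule sum.cong) (auto intro: sum.cong)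
  also have "\<dots> \<le> (\<Sum>i\<in>UNIV. \<sigma> i * (\<Sum>c\<in>UNIV. if blk c = i then (v$c)\<^sup>2 else 0))"
    unfolding L_def by (rule sum_mono) (rule Mblk_bound[where \<sigma>=\<sigma>, OF sp])
  also have "\<dots> = SQ \<sigma> blk v" unfolding SQ_def sum_blocks ..
  finally show ?thesis unfolding w_def .
qed

definition Wsq :: "('r \<Rightarrow> real) \<Rightarrow> real^'r \<Rightarrow> real" where
  "Wsq w x = (\<Sum>r\<in>UNIV. w r * (x $ r)\<^sup>2)"

definition Winner :: "('r \<Rightarrow> real) \<Rightarrow> real^'r \<Rightarrow> real^'r \<Rightarrow> real" where
  "Winner w x y = (\<Sum>r\<in>UNIV. w r * (x $ r) * (y $ r))"

lemma Wnorm_Wsq: "Wnorm w x = sqrt (Wsq w x)" unfolding Wnorm_def Wsq_def ..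
lemma Winvnorm_Winvsq: "Winvnorm w x = sqrt (Winvsq w x)" unfolding Winvnorm_def Winvsq_def ..

lemma Wsq_nonneg: "(\<And>r. w r > 0) \<Longrightarrow> Wsq w x \<ge> 0"
  unfolding Wsq_def by (intro sum_nonneg) (simp add: less_imp_le)

lemma Winvsq_nonneg: "(\<And>r. w r > 0) \<Longrightarrow> Winvsq w x \<ge> 0"
  unfolding Winvsq_def by (intro sum_nonneg) (simp add: less_imp_le)

lemma projD_in: "projD isIneq x \<in> Dset isIneq"
  unfolding projD_def Dset_def by auto

lemma projD_comp: "projD isIneq x $ r = (if isIneq r then max 0 (x $ r) else x $ r)"
  unfolding projD_def by simp

lemma sq_aux: "x < 0 \<Longrightarrow> 0 \<le> y \<Longrightarrow> x\<^sup>2 \<le> (x - y)\<^sup>2" for x y :: real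
proof -
  assume a: "x < 0" "0 \<le> y"
  have "(x-y)\<^sup>2 - x\<^sup>2 = y*(y - 2*x)" by (simp add: power2_eq_square algebra_simps)
  moreover have "y*(y - 2*x) \<ge> 0" using a by (simp add: mult_nonneg_nonneg)
  ultimately show ?thesis by linarith
qed

lemma projW_D:
  fixes x :: "real^'r::finite"
  assumes wp: "\<And>r. w r > 0"
  shows "projW w (Dset isIneq) x = projD isIneq x"
  unfolding projW_def
proof (rule some_equality)
  define p where "p = projD isIneq x"
  have term_le: "w r * ((x - p)$r)\<^sup>2 \<le> w r * ((x - y)$r)\<^sup>2" if "y \<in> Dset isIneq" for y r
  proof -
    have "((x - p)$r)\<^sup>2 \<le> ((x - y)$r)\<^sup>2"
    proof (cases "isIneq r \<and> x $ r < 0")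
      case True
      then have "p $ r = 0" "y $ r \<ge> 0" using that unfolding p_def projD_def Dset_def by auto
      then show ?thesis using sq_aux[of "x$r" "y$r"] True by simp
    next
      case False
      then have "p $ r = x $ r" unfolding p_def projD_def by auto
      then show ?thesis by simp
    qed
    then show ?thesis using wp[of r] by (simp add: mult_left_mono)
  qed
  have le: "Wnorm w (x - p) \<le> Wnorm w (x - y)" if "y \<in> Dset isIneq" for y
    unfolding Wnorm_def by (intro real_sqrt_le_mono sum_mono term_le[OF that])
  show "p \<in> Dset isIneq \<and> (\<forall>y'\<in>Dset isIneq. Wnorm w (x - p) \<le> Wnorm w (x - y'))"
    using le projD_in p_def by blast
  fix y assume y: "y \<in> Dset isIneq \<and> (\<forall>y'\<in>Dset isIneq. Wnorm w (x - y) \<le> Wnorm w (x - y'))"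
  then have "Wnorm w (x - y) \<le> Wnorm w (x - p)" using projD_in p_def by blast
  then have "(\<Sum>r\<in>UNIV. w r * ((x - y)$r)\<^sup>2) \<le> (\<Sum>r\<in>UNIV. w r * ((x - p)$r)\<^sup>2)"
    unfolding Wnorm_def by simp
  then have "(\<Sum>r\<in>UNIV. w r * ((x - y)$r)\<^sup>2 - w r * ((x - p)$r)\<^sup>2) = 0"
    using sum_mono[of UNIV "\<lambda>r. w r * ((x - p)$r)\<^sup>2" "\<lambda>r. w r * ((x - y)$r)\<^sup>2"] term_le y
    by (simp add: sum_subtractf)
  then have eq: "w r * ((x - y)$r)\<^sup>2 - w r * ((x - p)$r)\<^sup>2 = 0" for r
    using term_le y by (subst (asm) sum_nonneg_eq_0_iff) auto
  show "y = p"
    unfolding vec_eq_iff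
  proof
    fix r
    have e2: "((x - y)$r)\<^sup>2 = ((x - p)$r)\<^sup>2" using eq[of r] wp[of r] by simp
    show "y $ r = p $ r"
    proof (cases "isIneq r")
      case True
      then have y0: "y $ r \<ge> 0" using y unfolding Dset_def by auto
      show ?thesis
      proof (cases "x $ r \<ge> 0")
        case True
        then show ?thesis using e2 \<open>isIneq r\<close> unfolding p_def projD_def by (simp add: power2_eq_iff)
      next
        case False
        then have "p $ r = 0" using \<open>isIneq r\<close> unfolding p_def projD_def by simp
        then have "(x$r - y$r)\<^sup>2 = (x$r)\<^sup>2" using e2 by simp
        then have "x$r - y$r = x$r \<or> x$r - y$r = - x$r" by (simp add: power2_eq_iff)
        then show ?thesis using False y0 \<open>p $ r = 0\<close> by auto
      qed
    next
      case False
      then show ?thesis using e2 unfolding p_def projD_def by simp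
    qed
  qed
qed

lemma proj_ineq:
  fixes a \<rho> \<mu> :: "real^'r::finite"
  assumes wp: "\<And>r. w r > 0" and mu: "\<mu> \<in> Dset isIneq"
    and b: "b = projD isIneq (a + Winv w \<rho>)"
  shows "(\<Sum>r\<in>UNIV. (\<rho> $ r - w r * (b $ r - a $ r)) * (\<mu> $ r - b $ r)) \<le> 0"
proof (rule sum_nonpos)
  fix r
  have wr: "w r > 0" by (rule wp)
  show "(\<rho> $ r - w r * (b $ r - a $ r)) * (\<mu> $ r - b $ r) \<le> 0"
  proof (cases "isIneq r")
    case False
    then show ?thesis using wr unfolding b projD_def Winv_def by simp
  next
    case True
    then have m0: "\<mu> $ r \<ge> 0" using mu unfolding Dset_def by auto
    show ?thesis
    proof (cases "a $ r + \<rho> $ r / w r \<ge> 0")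
      case True
      then show ?thesis using wr \<open>isIneq r\<close> unfolding b projD_def Winv_def by simp
    next
      case False
      then have "\<rho> $ r < - w r * a $ r" using wr by (simp add: field_simps)
      moreover have "b $ r = 0" using False \<open>isIneq r\<close> unfolding b projD_def Winv_def by simp
      ultimately show ?thesis using m0 by (simp add: mult_nonpos_nonneg)
    qed
  qed
qed

lemma lhs_bound:
  fixes a \<rho> :: "real^'r::finite"
  assumes wp: "\<And>r. w r > 0" and aD: "a \<in> Dset isIneq"
    and b: "b = projD isIneq (a + Winv w \<rho>)"
  shows "Winvsq w (projD isIneq \<rho>) \<le> Wsq w (b - a)"
  unfolding Winvsq_def Wsq_def
proof (rule sum_mono)
  fix r
  have wr: "w r > 0" by (rule wp)
  show "(projD isIneq \<rho> $ r)\<^sup>2 / w r \<le> w r * ((b - a) $ r)\<^sup>2"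
  proof (cases "isIneq r")
    case False
    then show ?thesis using wr unfolding b projD_def Winv_def by (simp add: power_divide power2_eq_square)
  next
    case True
    then have a0: "a $ r \<ge> 0" using aD unfolding Dset_def by auto
    show ?thesis
    proof (cases "\<rho> $ r > 0")
      case True
      then have "a $ r + \<rho> $ r / w r \<ge> 0" using a0 wr by simp
      then show ?thesis using True wr \<open>isIneq r\<close> unfolding b projD_def Winv_def
        by (simp add: power_divide power2_eq_square)
    next
      case False
      then show ?thesis using wr \<open>isIneq r\<close> unfolding projD_def by simp
    qed
  qed
qed

lemma smooth_termwise:
  fixes D u :: "real^'r::finite"
  assumes wp: "\<And>r. w r > 0"
  shows "Wsq w D + 2 * (\<Sum>r\<in>UNIV. D $ r * u $ r) + Winvsq w u \<ge> 0"
proof -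
  have "Wsq w D + 2 * (\<Sum>r\<in>UNIV. D $ r * u $ r) + Winvsq w u
      = (\<Sum>r\<in>UNIV. (w r * D $ r + u $ r)\<^sup>2 / w r)"
    unfolding Wsq_def Winvsq_def sum_distrib_left sum.distrib[symmetric]
    by (rule sum.cong[OF refl]) (subgoal_tac "w x \<noteq> 0", simp add: field_simps power2_eq_square, use wp in \<open>simp add: less_imp_neq[symmetric]\<close>)
  also have "\<dots> \<ge> 0" by (intro sum_nonneg) (simp add: less_imp_le wp)
  finally show ?thesis .
qed

lemma Lag_affine:
  "Lag f G g z \<mu> = Lag f G g z a + (\<Sum>r\<in>UNIV. (\<mu>$r - a$r) * ((G *v z)$r - g$r))"
  unfolding Lag_eq by (simp add: sum.distrib[symmetric] algebra_simps sum_subtractf[symmetric])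

lemma d_le:
  fixes f :: "'b::finite \<Rightarrow> real^'n::finite \<Rightarrow> real"
  assumes sc: "\<And>i. block_strongly_convex blk i (\<sigma> i) (f i)" and sp: "\<And>i. \<sigma> i > 0"
  shows "dualfun f G g lm \<le> Lag f G g z lm"
  unfolding dualfun_def by (rule cInf_lower) (auto intro: Lag_bdd_below[OF sc sp])

lemma d_eq:
  assumes "\<And>z'. Lag f G g z lm \<le> Lag f G g z' lm"
  shows "dualfun f G g lm = Lag f G g z lm"
  unfolding dualfun_def by (rule cInf_eq_minimum) (use assms in auto)

lemma d_ge:
  assumes "\<And>z. c \<le> Lag f G g z lm"
  shows "c \<le> dualfun f G g lm"
  unfolding dualfun_def by (rule cInf_greatest) (use assms in auto)

lemma Lag_lm_affine:
  "Lag f G g z ((1 - t) *\<^sub>R x + t *\<^sub>R y) = (1 - t) * Lag f G g z x + t * Lag f G g z y"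
proof -
  have e: "(\<Sum>r\<in>UNIV. ((1 - t) *\<^sub>R x + t *\<^sub>R y)$r * ((G *v z)$r - g$r))
     = (1 - t) * (\<Sum>r\<in>UNIV. x$r * ((G *v z)$r - g$r)) + t * (\<Sum>r\<in>UNIV. y$r * ((G *v z)$r - g$r))"
    unfolding sum_distrib_left sum.distrib[symmetric]
    by (rule sum.cong) (simp_all add: algebra_simps)
  show ?thesis unfolding Lag_eq e by (simp add: algebra_simps)
qed

lemma d_concave:
  fixes f :: "'b::finite \<Rightarrow> real^'n::finite \<Rightarrow> real" and G :: "real^'n^'r::finite"
  assumes sc: "\<And>i. block_strongly_convex blk i (\<sigma> i) (f i)" and sp: "\<And>i. \<sigma> i > 0"
  shows "convex_on UNIV (\<lambda>l. - dualfun f G g l)"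
proof (rule convex_onI)
  fix t :: real and x y :: "real^'r"
  assume t: "0 < t" "t < 1"
  have "(1 - t) * dualfun f G g x + t * dualfun f G g y \<le> dualfun f G g ((1 - t) *\<^sub>R x + t *\<^sub>R y)"
  proof (rule d_ge)
    fix z
    have "(1 - t) * dualfun f G g x \<le> (1 - t) * Lag f G g z x"
      using t d_le[OF sc sp] by (simp add: mult_left_mono)
    moreover have "t * dualfun f G g y \<le> t * Lag f G g z y"
      using t d_le[OF sc sp] by (simp add: mult_left_mono)
    ultimately show "(1 - t) * dualfun f G g x + t * dualfun f G g y \<le> Lag f G g z ((1 - t) *\<^sub>R x + t *\<^sub>R y)"
      unfolding Lag_lm_affine by simp
  qed
  then show "- dualfun f G g ((1 - t) *\<^sub>R x + t *\<^sub>R y) \<le> (1 - t) * - dualfun f G g x + t * - dualfun f G g y"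
    by simp
qed simp

lemma d_cont:
  fixes f :: "'b::finite \<Rightarrow> real^'n::finite \<Rightarrow> real" and G :: "real^'n^'r::finite"
  assumes sc: "\<And>i. block_strongly_convex blk i (\<sigma> i) (f i)" and sp: "\<And>i. \<sigma> i > 0"
  shows "continuous_on UNIV (dualfun f G g)"
proof -
  have "continuous_on UNIV (\<lambda>l. - dualfun f G g l)"
    by (rule convex_on_continuous[OF open_UNIV d_concave[OF sc sp]])
  then have "continuous_on UNIV (\<lambda>l. - (- dualfun f G g l))" by (rule continuous_on_minus)
  then show ?thesis by simp
qed

lemma Dset_closed: "closed (Dset isIneq :: (real^'r::finite) set)"
proof -
  have "Dset isIneq = (\<Inter>r\<in>{r. isIneq r}. {x::real^'r. 0 \<le> x $ r})" unfolding Dset_def by auto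
  moreover have "closed {x::real^'r. 0 \<le> x $ r}" for r
    by (rule closed_Collect_le) (auto intro: continuous_intros)
  ultimately show ?thesis by auto
qed

lemma inner_row: "inner (row r G) x = (G *v x) $ r"
  by (simp add: row_def inner_cart matrix_vector_mult_def)

lemma surj_eq:
  fixes G :: "real^'n::finite^'r::finite"
  assumes rank: "\<And>c. (\<Sum>r\<in>{r. \<not> isIneq r}. c r *\<^sub>R row r G) = 0 \<Longrightarrow> \<forall>r. \<not> isIneq r \<longrightarrow> c r = 0"
    and r0: "\<not> isIneq r0"
  shows "\<exists>\<delta>. \<forall>r. \<not> isIneq r \<longrightarrow> (G *v \<delta>)$r = (if r = r0 then 1 else 0)"
proof (rule ccontr)
  assume nex: "\<not> ?thesis"
  define M where "M z = (\<chi> r. if isIneq r then 0 else (G *v z)$r)" for z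
  define e where "e = (\<chi> r. if r = r0 then 1 else (0::real))"
  have linM: "linear M"
    by (rule linearI) (auto simp: M_def vec_eq_iff matrix_vector_right_distrib matrix_vector_mult_scaleR)
  have sub: "subspace (range M)" by (rule linear_subspace_image[OF linM subspace_UNIV])
  have eM: "e \<notin> range M"
  proof
    assume "e \<in> range M"
    then obtain \<delta> where "e = M \<delta>" by auto
    then have "\<forall>r. \<not> isIneq r \<longrightarrow> (G *v \<delta>)$r = (if r = r0 then 1 else 0)"
      by (auto simp: vec_eq_iff M_def e_def)
    with nex show False by blast
  qed
  obtain y z where y: "y \<in> span (range M)" and orth: "\<And>w. w \<in> span (range M) \<Longrightarrow> orthogonal z w"
    and ez: "e = y + z"
    using orthogonal_subspace_decomp_exists by blast
  have spanM: "span (range M) = range M" using sub by simp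
  obtain yz where yz: "y = M yz" using y spanM by auto
  have zi: "z $ r = 0" if "isIneq r" for r
  proof -
    have "e $ r = 0" using that r0 unfolding e_def by auto
    moreover have "y $ r = 0" using that unfolding yz M_def by simp
    ultimately show ?thesis using ez by (simp add: vec_eq_iff)
  qed
  define v where "v = (\<Sum>r\<in>{r. \<not> isIneq r}. (z$r) *\<^sub>R row r G)"
  have iv: "inner v x = inner z (M x)" for x
  proof -
    have "inner v x = (\<Sum>r\<in>{r. \<not> isIneq r}. z$r * (G *v x)$r)"
      unfolding v_def by (simp add: inner_sum_left inner_row)
    also have "\<dots> = (\<Sum>r\<in>UNIV. if \<not> isIneq r then z$r * (G *v x)$r else 0)"
      by (simp add: sum.inter_filter[symmetric])
    also have "\<dots> = inner z (M x)"
      unfolding inner_cart M_def by (rule sum.cong) auto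
    finally show ?thesis .
  qed
  have "inner v v = 0" unfolding iv using orth[of "M v"] spanM by (auto simp: orthogonal_def)
  then have "v = 0" by simp
  then have "\<forall>r. \<not> isIneq r \<longrightarrow> z$r = 0" using rank[of "\<lambda>r. z$r"] unfolding v_def by blast
  then have "z = 0" using zi by (auto simp: vec_eq_iff)
  then have "e = M yz" using ez yz by simp
  then show False using eM by auto
qed

lemma ineq_bound:
  fixes f :: "'b::finite \<Rightarrow> real^'n::finite \<Rightarrow> real" and G :: "real^'n^'r::finite"
  assumes sc: "\<And>i. block_strongly_convex blk i (\<sigma> i) (f i)" and sp: "\<And>i. \<sigma> i > 0"
    and lD: "lm \<in> Dset isIneq" and c0: "c0 \<le> dualfun f G g lm"
    and zt: "\<forall>r. (\<not> isIneq r \<longrightarrow> (G *v zt) $ r = g $ r) \<and> (isIneq r \<longrightarrow> (G *v zt) $ r < g $ r)"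
    and r: "isIneq r"
  shows "lm$r * (g$r - (G *v zt)$r) \<le> (\<Sum>i\<in>UNIV. f i zt) - c0"
proof -
  define t where "t r' = lm$r' * ((G *v zt)$r' - g$r')" for r'
  have tn: "t r' \<le> 0" for r'
  proof (cases "isIneq r'")
    case True
    have "lm$r' \<ge> 0" using lD True unfolding Dset_def by auto
    moreover have "(G *v zt)$r' - g$r' \<le> 0" using zt True by (simp add: less_imp_le)
    ultimately show ?thesis unfolding t_def by (rule mult_nonneg_nonpos)
  next
    case False then show ?thesis using zt unfolding t_def by simp
  qed
  have "(\<Sum>r'\<in>UNIV. t r') = t r + (\<Sum>r'\<in>UNIV - {r}. t r')"
    by (simp add: sum.remove)
  also have "\<dots> \<le> t r" using tn by (simp add: sum_nonpos)
  finally have st: "(\<Sum>r'\<in>UNIV. t r') \<le> t r" .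
  have "c0 \<le> Lag f G g zt lm" using c0 d_le[OF sc sp] order_trans by blast
  also have "\<dots> = (\<Sum>i\<in>UNIV. f i zt) + (\<Sum>r'\<in>UNIV. t r')" unfolding Lag_eq t_def ..
  finally show ?thesis using st unfolding t_def by (simp add: algebra_simps)
qed

lemma eq_bound:
  fixes f :: "'b::finite \<Rightarrow> real^'n::finite \<Rightarrow> real" and G :: "real^'n^'r::finite"
  assumes sc: "\<And>i. block_strongly_convex blk i (\<sigma> i) (f i)" and sp: "\<And>i. \<sigma> i > 0"
    and lD: "lm \<in> Dset isIneq" and c0: "c0 \<le> dualfun f G g lm"
    and zt: "\<forall>r. (\<not> isIneq r \<longrightarrow> (G *v zt) $ r = g $ r) \<and> (isIneq r \<longrightarrow> (G *v zt) $ r < g $ r)"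
    and r0: "\<not> isIneq r0"
    and dl: "\<forall>r. \<not> isIneq r \<longrightarrow> (G *v \<delta>)$r = (if r = r0 then 1 else 0)"
    and ub: "\<And>r. isIneq r \<Longrightarrow> lm$r \<le> u r"
    and sg: "\<bar>sg\<bar> \<le> 1"
  shows "sg * lm$r0 \<le> (\<Sum>i\<in>UNIV. f i (zt - sg *\<^sub>R \<delta>))
           + (\<Sum>r\<in>UNIV. if isIneq r then u r * \<bar>(G *v \<delta>)$r\<bar> else 0) - c0"
proof -
  define zs where "zs = zt - sg *\<^sub>R \<delta>"
  have Gzs: "(G *v zs)$r = (G *v zt)$r - sg * (G *v \<delta>)$r" for r
    unfolding zs_def by (simp add: matrix_vector_mult_diff_distrib matrix_vector_mult_scaleR)
  define T where "T r = (if isIneq r then u r * \<bar>(G *v \<delta>)$r\<bar> else if r = r0 then - sg * lm$r0 else 0)" for r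
  have tb: "lm$r * ((G *v zs)$r - g$r) \<le> T r" for r
  proof (cases "isIneq r")
    case True
    have l0: "lm$r \<ge> 0" using lD True unfolding Dset_def by auto
    have "(G *v zs)$r - g$r \<le> \<bar>(G *v \<delta>)$r\<bar>"
    proof -
      have "- sg * (G *v \<delta>)$r \<le> \<bar>sg * (G *v \<delta>)$r\<bar>" by linarith
      also have "\<dots> \<le> \<bar>(G *v \<delta>)$r\<bar>" using sg by (simp add: abs_mult mult_left_le_one_le)
      moreover have "(G *v zt)$r < g$r" using zt True by blast
      ultimately show ?thesis unfolding Gzs by linarith
    qed
    then have "lm$r * ((G *v zs)$r - g$r) \<le> lm$r * \<bar>(G *v \<delta>)$r\<bar>" using l0 by (simp add: mult_left_mono)
    also have "\<dots> \<le> u r * \<bar>(G *v \<delta>)$r\<bar>" using ub[OF True] by (simp add: mult_right_mono)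
    finally show ?thesis unfolding T_def using True by simp
  next
    case False
    then show ?thesis using zt dl unfolding T_def Gzs by auto
  qed
  have sT: "(\<Sum>r\<in>UNIV. T r) = - sg * lm$r0 + (\<Sum>r\<in>UNIV. if isIneq r then u r * \<bar>(G *v \<delta>)$r\<bar> else 0)"
  proof -
    have "(\<Sum>r\<in>UNIV. T r) = (\<Sum>r\<in>UNIV. (if r = r0 then - sg * lm$r0 else 0) + (if isIneq r then u r * \<bar>(G *v \<delta>)$r\<bar> else 0))"
      unfolding T_def by (rule sum.cong) (use r0 in auto)
    then show ?thesis by (simp add: sum.distrib)
  qed
  have "c0 \<le> Lag f G g zs lm" using c0 d_le[OF sc sp] order_trans by blast
  also have "\<dots> = (\<Sum>i\<in>UNIV. f i zs) + (\<Sum>r\<in>UNIV. lm$r * ((G *v zs)$r - g$r))" unfolding Lag_eq ..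
  also have "\<dots> \<le> (\<Sum>i\<in>UNIV. f i zs) + (\<Sum>r\<in>UNIV. T r)" using tb by (simp add: sum_mono)
  finally show ?thesis unfolding sT zs_def by simp
qed

lemma dual_exists:
  fixes f :: "'b::finite \<Rightarrow> real^'n::finite \<Rightarrow> real" and G :: "real^'n^'r::finite"
  assumes sc: "\<And>i. block_strongly_convex blk i (\<sigma> i) (f i)" and sp: "\<And>i. \<sigma> i > 0"
    and rank: "\<And>c. (\<Sum>r\<in>{r. \<not> isIneq r}. c r *\<^sub>R row r G) = 0 \<Longrightarrow> \<forall>r. \<not> isIneq r \<longrightarrow> c r = 0"
    and slater: "\<exists>zt. \<forall>r. (\<not> isIneq r \<longrightarrow> (G *v zt) $ r = g $ r) \<and> (isIneq r \<longrightarrow> (G *v zt) $ r < g $ r)"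
    and l0: "l0 \<in> Dset isIneq"
  shows "dualopt f G g isIneq \<noteq> {} \<and> compact (dualopt f G g isIneq)"
proof -
  define d where "d = dualfun f G g"
  have dc: "continuous_on UNIV d" unfolding d_def by (rule d_cont[OF sc sp])
  obtain zt where zt: "\<forall>r. (\<not> isIneq r \<longrightarrow> (G *v zt) $ r = g $ r) \<and> (isIneq r \<longrightarrow> (G *v zt) $ r < g $ r)"
    using slater by blast
  define c0 where "c0 = d l0"
  define K where "K = Dset isIneq \<inter> {lm. c0 \<le> d lm}"
  define F0 where "F0 = (\<Sum>i\<in>UNIV. f i zt)"
  define s where "s r = g$r - (G *v zt)$r" for r
  define u where "u r = (F0 - c0) / s r" for r
  have ub: "lm$r \<le> u r" if "lm \<in> K" "isIneq r" for lm r
  proof -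
    have "lm$r * s r \<le> F0 - c0" unfolding s_def F0_def
      by (rule ineq_bound[OF sc sp _ _ zt \<open>isIneq r\<close>]) (use that in \<open>auto simp: K_def d_def\<close>)
    moreover have "s r > 0" using zt that unfolding s_def by auto
    ultimately show ?thesis unfolding u_def by (simp add: pos_le_divide_eq)
  qed
  have "\<forall>r0. \<exists>\<delta>. \<not> isIneq r0 \<longrightarrow> (\<forall>r. \<not> isIneq r \<longrightarrow> (G *v \<delta>)$r = (if r = r0 then 1 else 0))"
    using surj_eq[OF rank] by blast
  then obtain dl where dl: "\<And>r0. \<not> isIneq r0 \<Longrightarrow> \<forall>r. \<not> isIneq r \<longrightarrow> (G *v dl r0)$r = (if r = r0 then 1 else 0)"
    by metis
  define C where "C r0 = (\<Sum>r\<in>UNIV. if isIneq r then u r * \<bar>(G *v dl r0)$r\<bar> else 0)" for r0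
  define bnd where "bnd r = (if isIneq r then \<bar>u r\<bar> else
      \<bar>(\<Sum>i\<in>UNIV. f i (zt - 1 *\<^sub>R dl r)) + C r - c0\<bar> + \<bar>(\<Sum>i\<in>UNIV. f i (zt - (-1) *\<^sub>R dl r)) + C r - c0\<bar>)" for r
  have cb: "\<bar>lm$r\<bar> \<le> bnd r" if lK: "lm \<in> K" for lm r
  proof (cases "isIneq r")
    case True
    then have "0 \<le> lm$r" using lK unfolding K_def Dset_def by auto
    then show ?thesis using ub[OF lK True] True unfolding bnd_def by simp
  next
    case False
    have one: "\<bar>1::real\<bar> \<le> 1" and mone: "\<bar>-1::real\<bar> \<le> 1" by simp_all
    have lD: "lm \<in> Dset isIneq" and c: "c0 \<le> dualfun f G g lm" using lK unfolding K_def d_def by auto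
    have "1 * lm$r \<le> (\<Sum>i\<in>UNIV. f i (zt - 1 *\<^sub>R dl r)) + C r - c0"
      unfolding C_def by (rule eq_bound[OF sc sp lD c zt False dl[OF False] ub[OF lK] one])
    moreover have "(-1) * lm$r \<le> (\<Sum>i\<in>UNIV. f i (zt - (-1) *\<^sub>R dl r)) + C r - c0"
      unfolding C_def by (rule eq_bound[OF sc sp lD c zt False dl[OF False] ub[OF lK] mone])
    ultimately have "\<bar>lm$r\<bar> \<le> \<bar>(\<Sum>i\<in>UNIV. f i (zt - 1 *\<^sub>R dl r)) + C r - c0\<bar> + \<bar>(\<Sum>i\<in>UNIV. f i (zt - (-1) *\<^sub>R dl r)) + C r - c0\<bar>"
      by arith
    then show ?thesis using False unfolding bnd_def by simp
  qed
  have bK: "bounded K"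
    unfolding bounded_iff
  proof (intro exI ballI)
    fix lm assume "lm \<in> K"
    have "norm lm \<le> (\<Sum>r\<in>UNIV. \<bar>lm$r\<bar>)" by (rule norm_le_l1_cart)
    also have "\<dots> \<le> (\<Sum>r\<in>UNIV. bnd r)" by (rule sum_mono) (rule cb[OF \<open>lm \<in> K\<close>])
    finally show "norm lm \<le> (\<Sum>r\<in>UNIV. bnd r)" .
  qed
  have cK: "closed K" unfolding K_def
    by (intro closed_Int Dset_closed closed_Collect_le dc continuous_on_const)
  have compK: "compact K" using bK cK by (simp add: compact_eq_bounded_closed)
  have l0K: "l0 \<in> K" using l0 unfolding K_def c0_def by simp
  obtain ls where ls: "ls \<in> K" "\<And>y. y \<in> K \<Longrightarrow> d y \<le> d ls"
    using continuous_attains_sup[OF compK _ continuous_on_subset[OF dc]] l0K by blast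
  have lsopt: "d \<mu> \<le> d ls" if "\<mu> \<in> Dset isIneq" for \<mu>
  proof (cases "\<mu> \<in> K")
    case True then show ?thesis using ls by blast
  next
    case False
    then have "d \<mu> < c0" using that unfolding K_def by auto
    moreover have "c0 \<le> d ls" using ls(1) unfolding K_def by auto
    ultimately show ?thesis by simp
  qed
  have eqS: "dualopt f G g isIneq = Dset isIneq \<inter> {lm. d ls \<le> d lm}"
    unfolding dualopt_def d_def[symmetric] using lsopt ls(1) unfolding K_def
    by (auto intro: order_trans)
  have "ls \<in> dualopt f G g isIneq" unfolding eqS using ls(1) unfolding K_def by auto
  moreover have "closed (dualopt f G g isIneq)" unfolding eqS
    by (intro closed_Int Dset_closed closed_Collect_le dc continuous_on_const)
  moreover have "dualopt f G g isIneq \<subseteq> K" unfolding eqS K_def using ls(1) unfolding K_def by auto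
  ultimately show ?thesis using bK by (auto simp: compact_eq_bounded_closed intro: bounded_subset)
qed

lemma Wsq_add: "Wsq w (x + y) = Wsq w x + 2 * Winner w x y + Wsq w y"
  unfolding Wsq_def Winner_def sum_distrib_left sum.distrib[symmetric]
  by (rule sum.cong) (simp_all add: power2_eq_square algebra_simps)

lemma Winner_uminus: "Winner w x (- y) = - Winner w x y"
  unfolding Winner_def by (simp add: sum_negf[symmetric])

lemma Winner_zero: "Winner w x 0 = 0"
  unfolding Winner_def by simp

lemma Wsq_uminus: "Wsq w (- x) = Wsq w x"
  unfolding Wsq_def by simp

lemma Wsq_minus_commute: "Wsq w (x - y) = Wsq w (y - x)"
  using Wsq_uminus[of w "y - x"] by simp

lemma Wnorm_minus_commute: "Wnorm w (x - y) = Wnorm w (y - x)"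
  unfolding Wnorm_Wsq using Wsq_minus_commute by metis

lemma Wnorm_sq: assumes wp: "\<And>r. w r > 0" shows "(Wnorm w x)\<^sup>2 = Wsq w x"
  unfolding Wnorm_Wsq using Wsq_nonneg[of w x, OF wp] by simp

lemma Wnorm_nonneg: assumes wp: "\<And>r. w r > 0" shows "Wnorm w x \<ge> 0"
  unfolding Wnorm_Wsq using Wsq_nonneg[of w x, OF wp] by simp

lemma Winner_CS:
  assumes wp: "\<And>r. w r > 0"
  shows "Winner w x y \<le> Wnorm w x * Wnorm w y"
proof -
  have "(Winner w x y)\<^sup>2 = (\<Sum>r\<in>UNIV. (sqrt (w r) * x$r) * (sqrt (w r) * y$r))\<^sup>2"
    unfolding Winner_def by (rule arg_cong[where f="\<lambda>t. t\<^sup>2"], rule sum.cong)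
      (use wp in \<open>auto simp: less_imp_le algebra_simps\<close>)
  also have "\<dots> \<le> (\<Sum>r\<in>UNIV. (sqrt (w r) * x$r)\<^sup>2) * (\<Sum>r\<in>UNIV. (sqrt (w r) * y$r)\<^sup>2)"
    by (rule Cauchy_Schwarz_ineq_sum)
  also have "\<dots> = Wsq w x * Wsq w y"
    unfolding Wsq_def power_mult_distrib using wp by (simp add: less_imp_le)
  finally have "(Winner w x y)\<^sup>2 \<le> Wsq w x * Wsq w y" .
  then have "\<bar>Winner w x y\<bar> \<le> sqrt (Wsq w x * Wsq w y)"
    using real_sqrt_le_mono by fastforce
  then show ?thesis unfolding Wnorm_Wsq real_sqrt_mult by simp
qed

lemma step_ineq:
  fixes f :: "'b::finite \<Rightarrow> real^'n::finite \<Rightarrow> real" and G :: "real^'n^'r::finite"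
    and rb :: "'r \<Rightarrow> 'j"
  assumes sc: "\<And>i. block_strongly_convex blk i (\<sigma> i) (f i)" and sp: "\<And>i. \<sigma> i > 0"
    and sparse: "\<And>j i r c. \<not> E j i \<Longrightarrow> rb r = j \<Longrightarrow> blk c = i \<Longrightarrow> G $ r $ c = 0"
    and wdef: "w = Wdiag G blk rb E \<sigma>"
    and wp: "\<And>r. w r > 0"
    and za: "\<And>z'. Lag f G g za a \<le> Lag f G g z' a"
    and zb: "\<And>z'. Lag f G g zb b \<le> Lag f G g z' b"
    and b: "b = projD isIneq (a + Winv w (G *v za - g))"
    and mu: "\<mu> \<in> Dset isIneq"
  shows "dualfun f G g \<mu> - dualfun f G g b \<le> Winner w (b - a) (\<mu> - a) - Wsq w (b - a) / 2"
proof -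
  define \<rho> where "\<rho> = G *v za - g"
  define D where "D = b - a"
  define u where "u = G *v (zb - za)"
  have da: "dualfun f G g a = Lag f G g za a" by (rule d_eq[OF za])
  have db: "dualfun f G g b = Lag f G g zb b" by (rule d_eq[OF zb])
  have s1: "dualfun f G g \<mu> \<le> dualfun f G g a + (\<Sum>r\<in>UNIV. (\<mu>$r - a$r) * \<rho>$r)"
    using d_le[OF sc sp, of G g \<mu> za] unfolding da Lag_affine[of f G g za \<mu> a] \<rho>_def by simp
  have q: "Lag f G g zb a \<ge> Lag f G g za a + SQ \<sigma> blk (zb - za) / 2" by (rule qgrowth[OF sc sp za])
  have kl: "Winvsq w u \<le> SQ \<sigma> blk (zb - za)"
    unfolding u_def wdef by (rule key_lip[OF sparse sp wp[unfolded wdef]])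
  have stw: "Wsq w D + 2 * (\<Sum>r\<in>UNIV. D $ r * u $ r) + Winvsq w u \<ge> 0" by (rule smooth_termwise[OF wp])
  have lb: "Lag f G g zb b = Lag f G g zb a + (\<Sum>r\<in>UNIV. D$r * \<rho>$r) + (\<Sum>r\<in>UNIV. D $ r * u $ r)"
  proof -
    have "Lag f G g zb b = Lag f G g zb a + (\<Sum>r\<in>UNIV. (b$r - a$r) * ((G *v zb)$r - g$r))"
      by (rule Lag_affine)
    also have "(\<Sum>r\<in>UNIV. (b$r - a$r) * ((G *v zb)$r - g$r)) = (\<Sum>r\<in>UNIV. D$r * \<rho>$r) + (\<Sum>r\<in>UNIV. D $ r * u $ r)"
      unfolding sum.distrib[symmetric] D_def \<rho>_def u_def
      by (rule sum.cong) (simp_all add: matrix_vector_mult_diff_distrib algebra_simps)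
    finally show ?thesis by simp
  qed
  have s2: "dualfun f G g b \<ge> dualfun f G g a + (\<Sum>r\<in>UNIV. D$r * \<rho>$r) - Wsq w D / 2"
    unfolding db da lb using q kl stw by linarith
  have s3: "(\<Sum>r\<in>UNIV. (\<rho> $ r - w r * (b $ r - a $ r)) * (\<mu> $ r - b $ r)) \<le> 0"
    by (rule proj_ineq[OF wp mu b[folded \<rho>_def]])
  have idt: "(\<Sum>r\<in>UNIV. (\<mu>$r - a$r) * \<rho>$r) - (\<Sum>r\<in>UNIV. D$r * \<rho>$r) + Wsq w D - Winner w D (\<mu> - a)
       = (\<Sum>r\<in>UNIV. (\<rho> $ r - w r * (b $ r - a $ r)) * (\<mu> $ r - b $ r))"
    unfolding Wsq_def Winner_def sum_subtractf[symmetric] sum.distrib[symmetric] D_def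
    by (rule sum.cong) (simp_all add: power2_eq_square algebra_simps)
  show ?thesis unfolding D_def[symmetric] using s1 s2 s3 idt by linarith
qed

theorem theorem3:
  fixes f :: "'b::finite \<Rightarrow> real^'n \<Rightarrow> real"
    and blk :: "'n::finite \<Rightarrow> 'b"
    and \<sigma> L :: "'b \<Rightarrow> real"
    and G :: "real^'n^'r::finite" and g :: "real^'r"
    and isIneq :: "'r \<Rightarrow> bool"
    and rb :: "'r \<Rightarrow> 'j::finite" and E :: "'j \<Rightarrow> 'b \<Rightarrow> bool"
    and lam :: "nat \<Rightarrow> real^'r" and z :: "nat \<Rightarrow> real^'n"
    and \<kappa> :: real and k :: nat
  defines "w \<equiv> Wdiag G blk rb E \<sigma>"
    and "\<Lambda>s \<equiv> dualopt f G g isIneq"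
    and "\<rho> \<equiv> 4 * (1 + \<kappa>) / (1 + 4 * (1 + \<kappa>))"
  assumes E_sparsity: "\<And>j i r c. \<not> E j i \<Longrightarrow> rb r = j \<Longrightarrow> blk c = i \<Longrightarrow> G $ r $ c = 0"
    and f_block: "\<And>i. depends_on_block blk i (f i)"
    and sigma_pos: "\<And>i. \<sigma> i > 0"
    and f_sconv: "\<And>i. block_strongly_convex blk i (\<sigma> i) (f i)"
    and f_lip: "\<And>i. block_lipschitz_gradient blk i (L i) (f i)"
    and A_full_row_rank: "\<And>c. (\<Sum>r\<in>{r. \<not> isIneq r}. c r *\<^sub>R row r G) = 0
                              \<Longrightarrow> \<forall>r. \<not> isIneq r \<longrightarrow> c r = 0"
    and slater: "\<exists>zt. \<forall>r. (\<not> isIneq r \<longrightarrow> (G *v zt) $ r = g $ r)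
                        \<and> (isIneq r \<longrightarrow> (G *v zt) $ r < g $ r)"
    and W_pos: "\<And>r. w r > 0"
    and lam0: "lam 0 \<in> Dset isIneq"
    and z_min: "\<And>k z'. Lag f G g (z k) (lam k) \<le> Lag f G g z' (lam k)"
    and lam_step: "\<And>k. lam (Suc k) = projD isIneq (lam k + Winv w (G *v z k - g))"
    and error_bound: "\<And>lm. lm \<in> Dset isIneq \<Longrightarrow> Tdist w \<Lambda>s lm \<le> Tdist w \<Lambda>s (lam 0) \<Longrightarrow>
          Wnorm w (lm - projW w \<Lambda>s lm) \<le> \<kappa> * Wnorm w (gradplus f G g isIneq w lm)"
    and k_ge: "k \<ge> 1"
  shows "Winvnorm w (projD isIneq (G *v z k - g))
           \<le> \<rho> powr ((real k - 2) / 2) * Rdist w \<Lambda>s (lam 0)"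
proof -
  note wp = W_pos
  have wdef: "w = Wdiag G blk rb E \<sigma>" using w_def by simp
  define d where "d = dualfun f G g"
  have lamD: "lam k \<in> Dset isIneq" for k by (cases k) (simp_all add: lam0 lam_step projD_in)
  define Dl where "Dl k = lam (Suc k) - lam k" for k
  define Wk where "Wk k = Wsq w (Dl k)" for k
  have Wk0: "Wk k \<ge> 0" for k unfolding Wk_def by (rule Wsq_nonneg[OF wp])
  have step: "d \<mu> - d (lam (Suc k)) \<le> Winner w (Dl k) (\<mu> - lam k) - Wk k / 2"
    if "\<mu> \<in> Dset isIneq" for \<mu> k
    unfolding d_def Dl_def Wk_def
    by (rule step_ineq[OF f_sconv sigma_pos E_sparsity wdef wp z_min z_min lam_step that])
  have ex: "\<Lambda>s \<noteq> {} \<and> compact \<Lambda>s" unfolding \<Lambda>s_def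
    by (rule dual_exists[OF f_sconv sigma_pos A_full_row_rank slater lam0])
  then obtain ls where ls: "ls \<in> \<Lambda>s" by blast
  define dstar where "dstar = d ls"
  have optle: "d \<mu> \<le> dstar" if "\<mu> \<in> Dset isIneq" for \<mu>
    using ls that unfolding dstar_def d_def \<Lambda>s_def dualopt_def by blast
  have opteq: "d s = dstar" if "s \<in> \<Lambda>s" for s
  proof -
    have "s \<in> Dset isIneq" "ls \<in> Dset isIneq" using that ls unfolding \<Lambda>s_def dualopt_def by auto
    then show ?thesis using that ls unfolding dstar_def d_def \<Lambda>s_def dualopt_def by (auto intro: antisym)
  qed
  have LsD: "s \<in> Dset isIneq" if "s \<in> \<Lambda>s" for s using that unfolding \<Lambda>s_def dualopt_def by auto
  define e where "e k = dstar - d (lam k)" for k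
  have e0: "e k \<ge> 0" for k unfolding e_def using optle[OF lamD] by simp
  have asc: "Wk k \<le> 2 * (e k - e (Suc k))" for k
    using step[OF lamD[of k], of k] unfolding e_def by (simp add: Winner_zero)
  have fej: "Wsq w (lam (Suc k) - s) \<le> Wsq w (lam k - s)" if s: "s \<in> \<Lambda>s" for s k
  proof -
    have "e (Suc k) \<le> Winner w (Dl k) (s - lam k) - Wk k / 2"
      using step[OF LsD[OF s], of k] opteq[OF s] unfolding e_def by simp
    moreover have "Winner w (Dl k) (s - lam k) = - Winner w (lam k - s) (Dl k)"
      using Winner_uminus[of w "Dl k" "lam k - s"] unfolding Winner_def by (simp add: algebra_simps)
    moreover have "lam (Suc k) - s = (lam k - s) + Dl k" unfolding Dl_def by simp
    then have "Wsq w (lam (Suc k) - s) = Wsq w (lam k - s) + 2 * Winner w (lam k - s) (Dl k) + Wsq w (Dl k)"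
      using Wsq_add[of w "lam k - s" "Dl k"] by (simp only:)
    ultimately show ?thesis using e0[of "Suc k"] unfolding Wk_def by linarith
  qed
  have fej2: "Wnorm w (lam k - s) \<le> Wnorm w (lam 0 - s)" if s: "s \<in> \<Lambda>s" for s k
  proof (induction k)
    case (Suc k)
    have "Wnorm w (lam (Suc k) - s) \<le> Wnorm w (lam k - s)"
      unfolding Wnorm_Wsq by (rule real_sqrt_le_mono[OF fej[OF s]])
    then show ?case using Suc by simp
  qed simp
  have Tk: "Tdist w \<Lambda>s (lam k) \<le> Tdist w \<Lambda>s (lam 0)" for k
    unfolding Tdist_def
  proof (rule cSUP_mono)
    show "\<Lambda>s \<noteq> {}" using ex by blast
    have "compact ((\<lambda>s. Wnorm w (lam 0 - s)) ` \<Lambda>s)"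
      by (rule compact_continuous_image) (use ex in \<open>auto simp: Wnorm_def intro!: continuous_intros\<close>)
    then show "bdd_above ((\<lambda>s. Wnorm w (lam 0 - s)) ` \<Lambda>s)"
      by (intro bounded_imp_bdd_above compact_imp_bounded)
    fix s assume "s \<in> \<Lambda>s"
    then show "\<exists>m\<in>\<Lambda>s. Wnorm w (lam k - s) \<le> Wnorm w (lam 0 - m)" using fej2 by blast
  qed
  have zopt: "zopt f G g (lam k) = z k" for k
    unfolding zopt_def
  proof (rule the_equality)
    show "\<forall>z'. Lag f G g (z k) (lam k) \<le> Lag f G g z' (lam k)" using z_min by blast
    fix y assume "\<forall>z'. Lag f G g y (lam k) \<le> Lag f G g z' (lam k)"
    then show "y = z k" using minimizer_unique[OF f_sconv sigma_pos z_min] by blast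
  qed
  have grad: "gradplus f G g isIneq w (lam k) = Dl k" for k
    unfolding gradplus_def dualgrad_def zopt projW_D[OF wp] Dl_def lam_step ..
  have projin: "projW w \<Lambda>s (lam k) \<in> \<Lambda>s" for k
  proof -
    have "\<exists>y\<in>\<Lambda>s. \<forall>y'\<in>\<Lambda>s. Wnorm w (lam k - y) \<le> Wnorm w (lam k - y')"
      by (rule continuous_attains_inf) (use ex in \<open>auto simp: Wnorm_def intro!: continuous_intros\<close>)
    then have "\<exists>y. y \<in> \<Lambda>s \<and> (\<forall>y'\<in>\<Lambda>s. Wnorm w (lam k - y) \<le> Wnorm w (lam k - y'))" by blast
    then show ?thesis unfolding projW_def by (rule someI2_ex) blast
  qed
  have ekb: "e (Suc k) \<le> \<kappa> * Wk k" for k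
  proof -
    define pk where "pk = projW w \<Lambda>s (lam k)"
    have eb: "Wnorm w (lam k - pk) \<le> \<kappa> * Wnorm w (Dl k)"
      using error_bound[OF lamD Tk] unfolding grad pk_def .
    have "e (Suc k) \<le> Winner w (Dl k) (pk - lam k) - Wk k / 2"
      using step[OF LsD[OF projin], of k k] opteq[OF projin[of k]] unfolding e_def pk_def by simp
    also have "\<dots> \<le> Winner w (Dl k) (pk - lam k)" using Wk0[of k] by simp
    also have "\<dots> \<le> Wnorm w (Dl k) * Wnorm w (pk - lam k)" by (rule Winner_CS[OF wp])
    also have "\<dots> = Wnorm w (Dl k) * Wnorm w (lam k - pk)" by (simp add: Wnorm_minus_commute)
    also have "\<dots> \<le> Wnorm w (Dl k) * (\<kappa> * Wnorm w (Dl k))"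
      by (rule mult_left_mono[OF eb Wnorm_nonneg[OF wp]])
    also have "\<dots> = \<kappa> * Wk k" unfolding Wk_def using Wnorm_sq[where x="Dl k", OF wp]
      by (simp add: power2_eq_square algebra_simps)
    finally show ?thesis .
  qed
  have e1: "e 1 \<le> Wsq w (s - lam 0) / 2" if s: "s \<in> \<Lambda>s" for s
  proof -
    have "e 1 \<le> Winner w (Dl 0) (s - lam 0) - Wk 0 / 2"
      using step[OF LsD[OF s], of 0] opteq[OF s] unfolding e_def by simp
    moreover have "Wsq w (Dl 0 + - (s - lam 0)) \<ge> 0" by (rule Wsq_nonneg[OF wp])
    ultimately show ?thesis
      unfolding Wsq_add Winner_uminus Wsq_uminus Wk_def by simp
  qed
  have lhs: "Winvsq w (projD isIneq (G *v z k - g)) \<le> Wk k"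
    unfolding Wk_def Dl_def by (rule lhs_bound[OF wp lamD lam_step])
  obtain s0 where s0: "s0 \<in> \<Lambda>s" "\<And>s. s \<in> \<Lambda>s \<Longrightarrow> Wnorm w (s0 - lam 0) \<le> Wnorm w (s - lam 0)"
  proof -
    have "\<exists>y\<in>\<Lambda>s. \<forall>y'\<in>\<Lambda>s. Wnorm w (y - lam 0) \<le> Wnorm w (y' - lam 0)"
      by (rule continuous_attains_inf) (use ex in \<open>auto simp: Wnorm_def intro!: continuous_intros\<close>)
    then show ?thesis using that by blast
  qed
  define R where "R = Rdist w \<Lambda>s (lam 0)"
  have Req: "R = Wnorm w (s0 - lam 0)"
    unfolding R_def Rdist_def by (rule cInf_eq_minimum) (use s0 in auto)
  have R0: "R \<ge> 0" unfolding Req by (rule Wnorm_nonneg[OF wp])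
  have R2: "R\<^sup>2 = Wsq w (s0 - lam 0)" unfolding Req by (rule Wnorm_sq[OF wp])
  define P where "P = \<rho> powr ((real k - 2) / 2)"
  have P0: "P \<ge> 0" unfolding P_def by simp
  have lhsn: "Winvnorm w (projD isIneq (G *v z k - g)) \<le> sqrt (Wk k)"
    unfolding Winvnorm_Winvsq by (rule real_sqrt_le_mono[OF lhs])
  obtain j where kj: "k = Suc j" using k_ge by (cases k) auto
  show ?thesis
  proof (cases "\<kappa> \<le> 0")
    case True
    have ez: "e (Suc i) = 0" for i
      using ekb[of i] e0[of "Suc i"] Wk0[of i] True by (smt (verit) mult_nonpos_nonneg)
    have "Wk k \<le> 0" using asc[of k] unfolding kj ez by simp
    then have "sqrt (Wk k) \<le> 0" by simp
    also have "0 \<le> P * R" using P0 R0 by simp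
    finally show ?thesis using lhsn unfolding P_def R_def by simp
  next
    case False
    then have kp: "\<kappa> > 0" by simp
    define q where "q = 2 * \<kappa> / (1 + 2 * \<kappa>)"
    have q0: "q \<ge> 0" unfolding q_def using kp by simp
    have erec: "e (Suc i) \<le> q * e i" for i
    proof -
      have "e (Suc i) \<le> \<kappa> * (2 * (e i - e (Suc i)))"
        using ekb[of i] asc[of i] kp by (smt (verit) mult_left_mono)
      then have "(1 + 2 * \<kappa>) * e (Suc i) \<le> 2 * \<kappa> * e i" by (simp add: algebra_simps)
      then show ?thesis unfolding q_def using kp by (simp add: field_simps)
    qed
    have epow: "e (Suc i) \<le> q ^ i * e 1" for i
    proof (induction i)
      case (Suc i)
      have "e (Suc (Suc i)) \<le> q * e (Suc i)" by (rule erec)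
      also have "\<dots> \<le> q * (q ^ i * e 1)" using Suc q0 by (simp add: mult_left_mono)
      finally show ?case by (simp add: algebra_simps)
    qed simp
    have rho0: "\<rho> > 0" and rho1: "\<rho> \<le> 1" unfolding \<rho>_def using kp by (simp_all add: field_simps)
    have qrho: "q \<le> \<rho>" unfolding q_def \<rho>_def using kp by (simp add: field_simps)
    have "\<rho> ^ j = \<rho> powr (real j)" using rho0 by (simp add: powr_realpow)
    also have "\<dots> \<le> \<rho> powr (real k - 2)"
      by (rule powr_mono') (use rho0 rho1 kj in auto)
    also have "\<rho> powr (real k - 2) = P\<^sup>2"
      unfolding P_def power2_eq_square by (simp add: powr_add[symmetric])
    finally have pw: "\<rho> ^ j \<le> P\<^sup>2" .
    have "Wk k \<le> 2 * e k" using asc[of k] e0[of "Suc k"] by simp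
    also have "\<dots> \<le> 2 * (q ^ j * e 1)" unfolding kj using epow[of j] by simp
    also have "\<dots> \<le> q ^ j * R\<^sup>2"
      using mult_left_mono[OF e1[OF s0(1)] zero_le_power[OF q0, of j]] unfolding R2 by simp
    also have "\<dots> \<le> \<rho> ^ j * R\<^sup>2"
      by (rule mult_right_mono[OF power_mono[OF qrho q0]]) simp
    also have "\<dots> \<le> P\<^sup>2 * R\<^sup>2"
      by (rule mult_right_mono[OF pw]) simp
    finally have "Wk k \<le> (P * R)\<^sup>2" by (simp add: power_mult_distrib)
    then have "sqrt (Wk k) \<le> sqrt ((P * R)\<^sup>2)" by (rule real_sqrt_le_mono)
    then have "sqrt (Wk k) \<le> P * R" using P0 R0 by simp
    then show ?thesis using lhsn unfolding P_def R_def by simp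
  qed
qed

end
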